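(* Let $X$ be a compact metric space with metric $d$, let $f:X\to X$ be continuous, and let $A\subset X$. If $A$ is a uniformly chaotic set, then there exists a strictly increasing sequence $Q$ of positive integers such that $A$ is a distributional chaotic set in the sequence $Q$.
   Context: A set $B\subset X$ is uniformly proximal if for every $\epsilon>0$ there is $k\in\mathbb N$ with $d(f^k x,f^k y)<\epsilon$ for all $x,y\in B$; it is uniformly rigid if for every $\epsilon>0$ there is $k\in\mathbb N$ with $d(f^k x,x)<\epsilon$ for all $x\in B$. $A$ is uniformly chaotic if there are Cantor sets (subsets homeomorphic to the Cantor ternary set) $C_1\subset C_2\subset\cdots$ with $A=\bigcup_i C_i$ and each $C_i$ both uniformly proximal and uniformly rigid. For a strictly increasing sequence $Q=\{m_i\}$ of positive integers, $x,y\in X$, $t>0$, $n\ge1$, put $\Phi^n_{(xy,Q)}(t)=\frac1n\#\{1\le i\le n: d(f^{m_i}(x),f^{m_i}(y))\le t\}$, $\Phi_{(xy,Q)}(t)=\liminf_n\Phi^n_{(xy,Q)}(t)$, $\Phi^\star_{(xy,Q)}(t)=\limsup_n\Phi^n_{(xy,Q)}(t)$. A pair $(x,y)$ is a distributional scrambled pair in $Q$ if $\Phi^\star_{(xy,Q)}(t)=1$ for all $t>0$ and $\Phi_{(xy,Q)}(s)=0$ for some $s>0$. $A$ is a distributional chaotic set in $Q$ if every pair $(x,y)\in A\times A$ with $x\ne y$ is a distributional scrambled pair in $Q$. *)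

theory Defs
  imports "HOL-Analysis.Analysis" "HOL-Library.Liminf_Limsup"
begin

definition cantor_ternary :: "real set" where
  "cantor_ternary = {x. \<exists>b :: nat \<Rightarrow> bool. x = (\<Sum>n. (if b n then 2 else 0) / 3 ^ Suc n)}"

definition is_cantor_set :: "'a::topological_space set \<Rightarrow> bool" where
  "is_cantor_set C \<longleftrightarrow> C homeomorphic cantor_ternary"

definition uniformly_proximal :: "('a::metric_space \<Rightarrow> 'a) \<Rightarrow> 'a set \<Rightarrow> bool" where
  "uniformly_proximal f B \<longleftrightarrow>
     (\<forall>\<epsilon>>0. \<exists>k::nat. k \<ge> 1 \<and> (\<forall>x\<in>B. \<forall>y\<in>B. dist ((f ^^ k) x) ((f ^^ k) y) < \<epsilon>))"

definition uniformly_rigid :: "('a::metric_space \<Rightarrow> 'a) \<Rightarrow> 'a set \<Rightarrow> bool" where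
  "uniformly_rigid f B \<longleftrightarrow>
     (\<forall>\<epsilon>>0. \<exists>k::nat. k \<ge> 1 \<and> (\<forall>x\<in>B. dist ((f ^^ k) x) x < \<epsilon>))"

definition uniformly_chaotic :: "('a::metric_space \<Rightarrow> 'a) \<Rightarrow> 'a set \<Rightarrow> bool" where
  "uniformly_chaotic f A \<longleftrightarrow>
     (\<exists>C :: nat \<Rightarrow> 'a set. (\<forall>i. C i \<subseteq> C (Suc i)) \<and> A = (\<Union>i. C i) \<and>
        (\<forall>i. is_cantor_set (C i) \<and> uniformly_proximal f (C i) \<and> uniformly_rigid f (C i)))"

text \<open>Sequence Q = {m_1 < m_2 < ...} is represented by Q :: nat => nat with m_(i+1) = Q i.
  Phi_n(t) = (1/n) #{1 <= i <= n. d(f^(m_i) x, f^(m_i) y) <= t}.\<close>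
definition Phi_n :: "('a::metric_space \<Rightarrow> 'a) \<Rightarrow> (nat \<Rightarrow> nat) \<Rightarrow> 'a \<Rightarrow> 'a \<Rightarrow> real \<Rightarrow> nat \<Rightarrow> real" where
  "Phi_n f Q x y t n =
     real (card {i \<in> {..<n}. dist ((f ^^ Q i) x) ((f ^^ Q i) y) \<le> t}) / real n"

definition Phi_lower :: "('a::metric_space \<Rightarrow> 'a) \<Rightarrow> (nat \<Rightarrow> nat) \<Rightarrow> 'a \<Rightarrow> 'a \<Rightarrow> real \<Rightarrow> ereal" where
  "Phi_lower f Q x y t = liminf (\<lambda>n. ereal (Phi_n f Q x y t n))"

definition Phi_upper :: "('a::metric_space \<Rightarrow> 'a) \<Rightarrow> (nat \<Rightarrow> nat) \<Rightarrow> 'a \<Rightarrow> 'a \<Rightarrow> real \<Rightarrow> ereal" where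
  "Phi_upper f Q x y t = limsup (\<lambda>n. ereal (Phi_n f Q x y t n))"

definition distributional_scrambled_pair ::
  "('a::metric_space \<Rightarrow> 'a) \<Rightarrow> (nat \<Rightarrow> nat) \<Rightarrow> 'a \<Rightarrow> 'a \<Rightarrow> bool" where
  "distributional_scrambled_pair f Q x y \<longleftrightarrow>
     (\<forall>t>0. Phi_upper f Q x y t = 1) \<and> (\<exists>s>0. Phi_lower f Q x y s = 0)"

definition distributional_chaotic_set ::
  "('a::metric_space \<Rightarrow> 'a) \<Rightarrow> (nat \<Rightarrow> nat) \<Rightarrow> 'a set \<Rightarrow> bool" where
  "distributional_chaotic_set f Q A \<longleftrightarrow>
     (\<forall>x\<in>A. \<forall>y\<in>A. x \<noteq> y \<longrightarrow> distributional_scrambled_pair f Q x y)"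

end

theory Submission
  imports Defs
begin

lemma unbounded_times:
  fixes D :: "nat \<Rightarrow> 'b \<Rightarrow> real"
  assumes ex: "\<And>e. e > 0 \<Longrightarrow> \<exists>k. k \<ge> 1 \<and> (\<forall>p\<in>S. D k p < e)"
    and nn: "\<And>k p. D k p \<ge> 0"
    and zero: "\<And>k M. k \<ge> 1 \<Longrightarrow> (\<forall>p\<in>S. D k p = 0) \<Longrightarrow> \<exists>m>M. \<forall>p\<in>S. D m p = 0"
    and e: "e > 0"
  shows "\<exists>m>M. \<forall>p\<in>S. D m p < e"
proof (cases "\<exists>k\<ge>1. \<forall>p\<in>S. D k p = 0")
  case True
  then obtain k where "k \<ge> 1" "\<forall>p\<in>S. D k p = 0" by blast
  from zero[OF this, of M] obtain m where "m > M" "\<forall>p\<in>S. D m p = 0" by blast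
  then show ?thesis using e by auto
next
  case False
  have "\<forall>k\<ge>1. \<exists>p\<in>S. D k p > 0"
  proof (intro allI impI)
    fix k :: nat assume "k \<ge> 1"
    with False obtain p where "p \<in> S" "D k p \<noteq> 0" by blast
    moreover have "D k p \<ge> 0" by (rule nn)
    ultimately show "\<exists>p\<in>S. D k p > 0" by force
  qed
  then obtain pp where pp: "\<And>k. k \<ge> 1 \<Longrightarrow> pp k \<in> S \<and> D k (pp k) > 0" by metis
  define e' where "e' = Min (insert e ((\<lambda>k. D k (pp k)) ` {1..M}))"
  have "e' > 0" unfolding e'_def using e pp by (subst Min_gr_iff) auto
  from ex[OF this] obtain k where k: "k \<ge> 1" "\<forall>p\<in>S. D k p < e'" by blast
  have "e' \<le> e" unfolding e'_def by simp
  have "k > M"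
  proof (rule ccontr)
    assume "\<not> k > M"
    then have "e' \<le> D k (pp k)" unfolding e'_def using k(1) by (intro Min_le) auto
    moreover have "D k (pp k) < e'" using k pp by blast
    ultimately show False by simp
  qed
  then show ?thesis using k \<open>e' \<le> e\<close> by force
qed

lemma funpow_mult_fix:
  assumes "(f ^^ k) z = z"
  shows "(f ^^ (k * l)) z = z"
proof (induction l)
  case 0 then show ?case by simp
next
  case (Suc l)
  have "(f ^^ (k * Suc l)) z = (f ^^ k) ((f ^^ (k * l)) z)"
    by (simp add: funpow_add)
  then show ?case using Suc assms by simp
qed

lemma rigid_unbounded:
  assumes "uniformly_rigid f C" "e > 0"
  shows "\<exists>m>M. \<forall>z\<in>C. dist ((f ^^ m) z) z < e"
proof -
  have "\<exists>m>M. \<forall>z\<in>C. (\<lambda>k z. dist ((f ^^ k) z) z) m z < e"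
  proof (rule unbounded_times[OF _ _ _ assms(2)])
    fix e :: real assume "e > 0"
    then show "\<exists>k\<ge>1. \<forall>p\<in>C. dist ((f ^^ k) p) p < e"
      using assms(1) unfolding uniformly_rigid_def by blast
  next
    fix k M assume k: "(k::nat) \<ge> 1" and z: "\<forall>p\<in>C. dist ((f ^^ k) p) p = 0"
    show "\<exists>m>M. \<forall>p\<in>C. dist ((f ^^ m) p) p = 0"
    proof (intro exI[of _ "k * Suc M"] conjI ballI)
      have "1 * Suc M \<le> k * Suc M" by (rule mult_le_mono1[OF k])
      then show "M < k * Suc M" by simp
    next
      fix p assume "p \<in> C"
      then have "(f ^^ k) p = p" using z by simp
      then show "dist ((f ^^ (k * Suc M)) p) p = 0" using funpow_mult_fix[where f=f and k=k and z=p and l="Suc M"] by simp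
    qed
  qed auto
  then show ?thesis by simp
qed

lemma prox_unbounded:
  assumes "uniformly_proximal f C" "e > 0"
  shows "\<exists>m>M. \<forall>x\<in>C. \<forall>y\<in>C. dist ((f ^^ m) x) ((f ^^ m) y) < e"
proof -
  have "\<exists>m>M. \<forall>p\<in>C \<times> C. (\<lambda>k p. dist ((f ^^ k) (fst p)) ((f ^^ k) (snd p))) m p < e"
  proof (rule unbounded_times[OF _ _ _ assms(2)])
    fix e :: real assume "e > 0"
    then obtain k where "k \<ge> 1" "\<forall>x\<in>C. \<forall>y\<in>C. dist ((f ^^ k) x) ((f ^^ k) y) < e"
      using assms(1) unfolding uniformly_proximal_def by blast
    then show "\<exists>k\<ge>1. \<forall>p\<in>C \<times> C. dist ((f ^^ k) (fst p)) ((f ^^ k) (snd p)) < e"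
      by (intro exI[of _ k]) auto
  next
    fix k M assume k: "(k::nat) \<ge> 1" and z: "\<forall>p\<in>C \<times> C. dist ((f ^^ k) (fst p)) ((f ^^ k) (snd p)) = 0"
    show "\<exists>m>M. \<forall>p\<in>C \<times> C. dist ((f ^^ m) (fst p)) ((f ^^ m) (snd p)) = 0"
    proof (intro exI[of _ "M + k"] conjI ballI)
      show "M < M + k" using k by simp
    next
      fix p assume "p \<in> C \<times> C"
      then have "(f ^^ k) (fst p) = (f ^^ k) (snd p)" using z by (cases p) simp
      then show "dist ((f ^^ (M + k)) (fst p)) ((f ^^ (M + k)) (snd p)) = 0"
        by (simp add: funpow_add)
    qed
  qed simp
  then show ?thesis by (metis mem_Sigma_iff fst_conv snd_conv)
qed

definition TT :: "nat \<Rightarrow> nat" where "TT j = j * fact j"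

lemma TT_Suc: "TT j * (j + 1) \<le> TT (Suc j)"
  unfolding TT_def by (simp add: algebra_simps)

lemma TT_less: "TT j < TT (Suc j)"
proof -
  have "fact j \<ge> (1::nat)" by (simp add: Suc_leI fact_gt_zero)
  then show ?thesis unfolding TT_def by (simp add: algebra_simps)
qed

lemma TT_mono: "strict_mono TT"
  using TT_less by (simp add: strict_mono_Suc_iff)

lemma TT_ge: "j \<le> TT j"
proof -
  have "fact j \<ge> (1::nat)" by (simp add: Suc_leI fact_gt_zero)
  then show ?thesis unfolding TT_def by simp
qed

definition bb :: "nat \<Rightarrow> nat" where "bb n = (LEAST j. n < TT (Suc j))"

lemma bb_eq:
  assumes "TT j \<le> n" "n < TT (Suc j)"
  shows "bb n = j"
  unfolding bb_def
proof (rule Least_equality)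
  show "n < TT (Suc j)" by fact
next
  fix y assume "n < TT (Suc y)"
  show "j \<le> y"
  proof (rule ccontr)
    assume "\<not> j \<le> y"
    then have "Suc y \<le> j" by simp
    then have "TT (Suc y) \<le> TT j" using TT_mono strict_mono_less_eq by blast
    then show False using \<open>n < TT (Suc y)\<close> assms by simp
  qed
qed

lemma Phi_n_le1: "Phi_n f Q x y t n \<le> 1"
proof -
  have "card {i \<in> {..<n}. dist ((f ^^ Q i) x) ((f ^^ Q i) y) \<le> t} \<le> card {..<n}"
    by (intro card_mono) auto
  then show ?thesis unfolding Phi_n_def by (cases "n = 0") auto
qed

lemma Phi_n_ge0: "Phi_n f Q x y t n \<ge> 0"
  unfolding Phi_n_def by simp

lemma Phi_upper_eq1:
  assumes "\<And>r N. r < 1 \<Longrightarrow> \<exists>n\<ge>N. Phi_n f Q x y t n \<ge> r"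
  shows "Phi_upper f Q x y t = 1"
proof (rule antisym)
  show "Phi_upper f Q x y t \<le> 1" unfolding Phi_upper_def
    by (rule Limsup_bounded) (simp add: Phi_n_le1)
next
  show "1 \<le> Phi_upper f Q x y t"
  proof (rule ccontr)
    assume "\<not> 1 \<le> Phi_upper f Q x y t"
    then obtain r where r: "Phi_upper f Q x y t < ereal r" "ereal r < 1"
      using ereal_dense2 by (metis not_le)
    then have "eventually (\<lambda>n. ereal (Phi_n f Q x y t n) < ereal r) sequentially"
      using Limsup_le_iff[where C="Phi_upper f Q x y t" and F=sequentially and X="\<lambda>n. ereal (Phi_n f Q x y t n)"]
      unfolding Phi_upper_def by auto
    then obtain N where N: "\<And>n. n \<ge> N \<Longrightarrow> Phi_n f Q x y t n < r"
      by (auto simp: eventually_sequentially)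
    from r have "r < 1" by simp
    from assms[OF this, of N] N show False by force
  qed
qed

lemma Phi_lower_eq0:
  assumes "\<And>r N. r > 0 \<Longrightarrow> \<exists>n\<ge>N. Phi_n f Q x y t n \<le> r"
  shows "Phi_lower f Q x y t = 0"
proof (rule antisym)
  show "0 \<le> Phi_lower f Q x y t" unfolding Phi_lower_def
    by (rule Liminf_bounded) (simp add: Phi_n_ge0)
next
  show "Phi_lower f Q x y t \<le> 0"
  proof (rule ccontr)
    assume "\<not> Phi_lower f Q x y t \<le> 0"
    then obtain r where r: "0 < ereal r" "ereal r < Phi_lower f Q x y t"
      using ereal_dense2 by (metis not_le)
    then have "eventually (\<lambda>n. ereal r < ereal (Phi_n f Q x y t n)) sequentially"
      using le_Liminf_iff[where C="Phi_lower f Q x y t" and F=sequentially and X="\<lambda>n. ereal (Phi_n f Q x y t n)"]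
      unfolding Phi_lower_def by auto
    then obtain N where N: "\<And>n. n \<ge> N \<Longrightarrow> r < Phi_n f Q x y t n"
      by (auto simp: eventually_sequentially)
    from r have "r > 0" by simp
    from assms[OF this, of N] N show False by force
  qed
qed


lemma small_inv:
  assumes "e > 0" "1 / e < real K" "K \<le> j"
  shows "1 / (real j + 1) < e"
proof -
  have "1 < e * real K" using assms(1,2) by (simp add: field_simps)
  also have "\<dots> \<le> e * (real j + 1)" using assms(1,3) by (intro mult_left_mono) auto
  finally show ?thesis using assms(1) by (simp add: field_simps)
qed

lemma ratio_bound:
  assumes "a * (j + 1) \<le> (n::nat)"
  shows "real a / real n \<le> 1 / (real j + 1)"
proof (cases "n = 0")
  case True then show ?thesis by simp
next
  case False
  have "real a * (real j + 1) \<le> real n" using assms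
    by (metis of_nat_1 of_nat_add of_nat_le_iff of_nat_mult)
  then show ?thesis using False by (simp add: field_simps)
qed

theorem theorem4p2:
  fixes X :: "'a::metric_space set" and f :: "'a \<Rightarrow> 'a" and A :: "'a set"
  assumes "compact X"
    and "continuous_on X f"
    and "f ` X \<subseteq> X"
    and "A \<subseteq> X"
    and "uniformly_chaotic f A"
  shows "\<exists>Q :: nat \<Rightarrow> nat. strict_mono Q \<and> (\<forall>i. Q i > 0) \<and> distributional_chaotic_set f Q A"
proof -
  obtain C :: "nat \<Rightarrow> 'a set" where Cmono: "\<And>i. C i \<subseteq> C (Suc i)" and AC: "A = (\<Union>i. C i)"
    and Cp: "\<And>i. uniformly_proximal f (C i) \<and> uniformly_rigid f (C i)"
    using assms(5) unfolding uniformly_chaotic_def by blast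
  have Cmono': "C i \<subseteq> C j" if "i \<le> j" for i j
    using lift_Suc_mono_le[of C, OF Cmono that] .
  define Pr where "Pr j m = (if even j then (\<forall>x\<in>C j. \<forall>y\<in>C j. dist ((f ^^ m) x) ((f ^^ m) y) < 1 / (real j + 1))
     else (\<forall>x\<in>C j. dist ((f ^^ m) x) x < 1 / (real j + 1)))" for j m
  have ex: "\<exists>m>M. Pr j m" for j M
  proof (cases "even j")
    case True
    have "1 / (real j + 1) > 0" by simp
    from prox_unbounded[OF conjunct1[OF Cp[of j]] this, of M] True show ?thesis
      unfolding Pr_def by simp
  next
    case False
    have "1 / (real j + 1) > 0" by simp
    from rigid_unbounded[OF conjunct2[OF Cp[of j]] this, of M] False show ?thesis
      unfolding Pr_def by simp
  qed
  define Q where "Q = rec_nat (SOME m. m > 0 \<and> Pr (bb 0) m) (\<lambda>n q. SOME m. m > q \<and> Pr (bb (Suc n)) m)"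
  have Q0: "Q 0 > 0 \<and> Pr (bb 0) (Q 0)"
    unfolding Q_def using someI_ex[OF ex[of 0 "bb 0"]] by simp
  have QS: "Q (Suc n) > Q n \<and> Pr (bb (Suc n)) (Q (Suc n))" for n
  proof -
    have "Q (Suc n) = (SOME m. m > Q n \<and> Pr (bb (Suc n)) m)" unfolding Q_def by simp
    then show ?thesis using someI_ex[OF ex[of "Q n" "bb (Suc n)"]] by simp
  qed
  have QP: "Pr (bb n) (Q n)" for n
    using Q0 QS by (cases n) auto
  have smQ: "strict_mono Q" using QS by (simp add: strict_mono_Suc_iff)
  have posQ: "Q i > 0" for i
  proof -
    have "Q 0 \<le> Q i" using smQ strict_mono_less_eq by blast
    then show ?thesis using Q0 by simp
  qed
  have blk: "Pr j (Q i)" if "TT j \<le> i" "i < TT (Suc j)" for i j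
    using QP[of i] bb_eq[OF that] by simp
  have "distributional_chaotic_set f Q A"
    unfolding distributional_chaotic_set_def
  proof (intro ballI impI)
    fix x y assume "x \<in> A" "y \<in> A" "x \<noteq> y"
    then obtain i1 i2 where "x \<in> C i1" "y \<in> C i2" using AC by blast
    define j0 where "j0 = max i1 i2"
    have xyC: "x \<in> C j \<and> y \<in> C j" if "j0 \<le> j" for j
      using Cmono'[of i1 j] Cmono'[of i2 j] that \<open>x \<in> C i1\<close> \<open>y \<in> C i2\<close>
      unfolding j0_def by auto
    have dpos: "dist x y > 0" using \<open>x \<noteq> y\<close> by simp
    show "distributional_scrambled_pair f Q x y"
      unfolding distributional_scrambled_pair_def
    proof (intro conjI allI impI)
      fix t :: real assume "t > 0"
      show "Phi_upper f Q x y t = 1"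
      proof (rule Phi_upper_eq1)
        fix r :: real and N :: nat assume "r < 1"
        define e where "e = min t (1 - r)"
        have "e > 0" using \<open>t > 0\<close> \<open>r < 1\<close> unfolding e_def by simp
        obtain K :: nat where K: "1 / e < real K" using reals_Archimedean2 by blast
        define j where "j = 2 * (K + j0 + N)"
        define n where "n = TT (Suc j)"
        have "even j" unfolding j_def by simp
        have "j0 \<le> j" "K \<le> j" "N \<le> j" unfolding j_def by auto
        have je: "1 / (real j + 1) < e" by (rule small_inv[OF \<open>e > 0\<close> K \<open>K \<le> j\<close>])
        have "N \<le> n" using TT_ge[of "Suc j"] \<open>N \<le> j\<close> unfolding n_def by simp
        define S where "S = {i \<in> {..<n}. dist ((f ^^ Q i) x) ((f ^^ Q i) y) \<le> t}"
        have sub: "{TT j..<n} \<subseteq> S"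
        proof
          fix i assume i: "i \<in> {TT j..<n}"
          then have "Pr j (Q i)" using blk unfolding n_def by auto
          then have "dist ((f ^^ Q i) x) ((f ^^ Q i) y) < 1 / (real j + 1)"
            using xyC[OF \<open>j0 \<le> j\<close>] \<open>even j\<close> unfolding Pr_def by simp
          then show "i \<in> S" using je i unfolding S_def e_def by auto
        qed
        have "card {TT j..<n} \<le> card S"
          by (rule card_mono[OF _ sub]) (simp add: S_def)
        then have cS: "real n - real (TT j) \<le> real (card S)"
          by simp
        have tb: "TT j * (j + 1) \<le> n" unfolding n_def using TT_Suc by simp
        have "n > 0" using TT_less[of j] unfolding n_def by simp
        have "1 - 1 / (real j + 1) \<le> 1 - real (TT j) / real n"
          using ratio_bound[OF tb] by simp
        also have "\<dots> = (real n - real (TT j)) / real n" using \<open>n > 0\<close> by (simp add: field_simps)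
        also have "\<dots> \<le> real (card S) / real n" using cS \<open>n > 0\<close> by (simp add: divide_right_mono)
        also have "\<dots> = Phi_n f Q x y t n" unfolding Phi_n_def S_def ..
        finally have "1 - 1 / (real j + 1) \<le> Phi_n f Q x y t n" .
        moreover have "r \<le> 1 - 1 / (real j + 1)" using je unfolding e_def by simp
        ultimately show "\<exists>n\<ge>N. r \<le> Phi_n f Q x y t n" using \<open>N \<le> n\<close> by force
      qed
    next
      show "\<exists>s>0. Phi_lower f Q x y s = 0"
      proof (intro exI conjI)
        show "dist x y / 2 > 0" using dpos by simp
        show "Phi_lower f Q x y (dist x y / 2) = 0"
        proof (rule Phi_lower_eq0)
          fix r :: real and N :: nat assume "r > 0"
          define e where "e = min r (dist x y / 4)"
          have "e > 0" using \<open>r > 0\<close> dpos unfolding e_def by simp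
          obtain K :: nat where K: "1 / e < real K" using reals_Archimedean2 by blast
          define j where "j = 2 * (K + j0 + N) + 1"
          define n where "n = TT (Suc j)"
          have "odd j" unfolding j_def by simp
          have "j0 \<le> j" "K \<le> j" "N \<le> j" unfolding j_def by auto
          have je: "1 / (real j + 1) < e" by (rule small_inv[OF \<open>e > 0\<close> K \<open>K \<le> j\<close>])
          have "N \<le> n" using TT_ge[of "Suc j"] \<open>N \<le> j\<close> unfolding n_def by simp
          define S where "S = {i \<in> {..<n}. dist ((f ^^ Q i) x) ((f ^^ Q i) y) \<le> dist x y / 2}"
          have sub: "S \<subseteq> {..<TT j}"
          proof
            fix i assume i: "i \<in> S"
            show "i \<in> {..<TT j}"
            proof (rule ccontr)
              assume "i \<notin> {..<TT j}"
              then have "TT j \<le> i" "i < TT (Suc j)" using i unfolding S_def n_def by auto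
              then have "Pr j (Q i)" using blk by auto
              then have "dist ((f ^^ Q i) x) x < 1 / (real j + 1)" "dist ((f ^^ Q i) y) y < 1 / (real j + 1)"
                using xyC[OF \<open>j0 \<le> j\<close>] \<open>odd j\<close> unfolding Pr_def by auto
              then have d1: "dist ((f ^^ Q i) x) x < dist x y / 4" "dist ((f ^^ Q i) y) y < dist x y / 4"
                using je unfolding e_def by auto
              have "dist x y \<le> dist x ((f ^^ Q i) x) + dist ((f ^^ Q i) x) ((f ^^ Q i) y) + dist ((f ^^ Q i) y) y"
                using dist_triangle[of x y "(f ^^ Q i) x"] dist_triangle[of "(f ^^ Q i) x" y "(f ^^ Q i) y"]
                by linarith
              moreover have "dist ((f ^^ Q i) x) ((f ^^ Q i) y) \<le> dist x y / 2" using i unfolding S_def by simp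
              moreover have "dist x ((f ^^ Q i) x) = dist ((f ^^ Q i) x) x" by (rule dist_commute)
              ultimately show False using d1 by linarith
            qed
          qed
          have "card S \<le> card {..<TT j}" by (rule card_mono[OF _ sub]) simp
          then have cS: "real (card S) \<le> real (TT j)" by simp
          have tb: "TT j * (j + 1) \<le> n" unfolding n_def using TT_Suc by simp
          have "n > 0" using TT_less[of j] unfolding n_def by simp
          have "Phi_n f Q x y (dist x y / 2) n = real (card S) / real n" unfolding Phi_n_def S_def ..
          also have "\<dots> \<le> real (TT j) / real n" using cS \<open>n > 0\<close> by (simp add: divide_right_mono)
          also have "\<dots> \<le> 1 / (real j + 1)" by (rule ratio_bound[OF tb])
          also have "\<dots> \<le> r" using je unfolding e_def by simp
          finally show "\<exists>n\<ge>N. Phi_n f Q x y (dist x y / 2) n \<le> r" using \<open>N \<le> n\<close> by blast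
        qed
      qed
    qed
  qed
  then show ?thesis using smQ posQ by blast
qed

end
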